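(* Let $X,Y$ be Scott domains quantified, respectively, by partial metrics $p_X,p_Y$ with values in $[0,1]$, and let $(a_n)_{n\geq1}$ be an enumeration of a countable basis of $X$. Then for every $0<\theta\leq\frac12$, the domain $X\Rightarrow Y$ of Scott-continuous functions from $X$ to $Y$ (ordered pointwise) is quantified by the partial metric $$p^\theta_{X\Rightarrow Y}(f,g)=\sum_{n=1}^\infty\theta^n\,p_Y\big(f(a_n),g(a_n)\big).$$
   Context: A partial metric (PM) on $X$ is $p:X\times X\to[0,+\infty]$ with $p(x,x)\leq p(x,y)$; $p(x,x)=p(x,y)=p(y,y)\Rightarrow x=y$; $p(x,y)=p(y,x)$; $p(x,y)\leq p(x,z)+p(z,y)-p(z,z)$. Open balls $B^p_\epsilon(x)=\{y\mid p(y,x)<p(x,x)+\epsilon\}$; $\mathcal O_p(X)$ is the topology of unions of open balls. In a dcpo, $x\ll y$ iff every directed $\Delta$ with $y\leq\bigvee\Delta$ contains some $d\geq x$; a basis is $B\subseteq X$ with $\{b\in B\mid b\ll x\}$ directed with join $x$ for each $x$; $x$ is compact if $x\ll x$. A Scott domain is a dcpo with a countable basis of compact elements which is bounded complete (every finite subset with an upper bound has a join). Scott-continuous functions are monotone maps preserving joins of directed sets. The Scott topology $\mathcal O_\sigma(X)$ consists of upper sets $U$ with $x\in U\Rightarrow\exists y\ll x,\ y\in U$. A dcpo $X$ is quantified by $p$ if $\mathcal O_\sigma(X)=\mathcal O_p(X)$. *)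

theory Defs
  imports Complex_Main "HOL-Library.FuncSet" "HOL-Library.Countable_Set"
begin

definition partial_order_on :: "'a set \<Rightarrow> ('a \<Rightarrow> 'a \<Rightarrow> bool) \<Rightarrow> bool" where
  "partial_order_on X le \<longleftrightarrow>
     (\<forall>x\<in>X. le x x) \<and>
     (\<forall>x\<in>X. \<forall>y\<in>X. le x y \<and> le y x \<longrightarrow> x = y) \<and>
     (\<forall>x\<in>X. \<forall>y\<in>X. \<forall>z\<in>X. le x y \<and> le y z \<longrightarrow> le x z)"

definition is_lub :: "'a set \<Rightarrow> ('a \<Rightarrow> 'a \<Rightarrow> bool) \<Rightarrow> 'a set \<Rightarrow> 'a \<Rightarrow> bool" where
  "is_lub X le D s \<longleftrightarrow> s \<in> X \<and> (\<forall>d\<in>D. le d s) \<and>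
     (\<forall>u\<in>X. (\<forall>d\<in>D. le d u) \<longrightarrow> le s u)"

definition directed :: "'a set \<Rightarrow> ('a \<Rightarrow> 'a \<Rightarrow> bool) \<Rightarrow> 'a set \<Rightarrow> bool" where
  "directed X le D \<longleftrightarrow> D \<subseteq> X \<and> D \<noteq> {} \<and>
     (\<forall>x\<in>D. \<forall>y\<in>D. \<exists>z\<in>D. le x z \<and> le y z)"

definition dcpo :: "'a set \<Rightarrow> ('a \<Rightarrow> 'a \<Rightarrow> bool) \<Rightarrow> bool" where
  "dcpo X le \<longleftrightarrow> partial_order_on X le \<and>
     (\<forall>D. directed X le D \<longrightarrow> (\<exists>s. is_lub X le D s))"

definition way_below :: "'a set \<Rightarrow> ('a \<Rightarrow> 'a \<Rightarrow> bool) \<Rightarrow> 'a \<Rightarrow> 'a \<Rightarrow> bool" where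
  "way_below X le x y \<longleftrightarrow>
     (\<forall>D s. directed X le D \<longrightarrow> is_lub X le D s \<longrightarrow> le y s \<longrightarrow> (\<exists>d\<in>D. le x d))"

definition is_basis :: "'a set \<Rightarrow> ('a \<Rightarrow> 'a \<Rightarrow> bool) \<Rightarrow> 'a set \<Rightarrow> bool" where
  "is_basis X le B \<longleftrightarrow> B \<subseteq> X \<and>
     (\<forall>x\<in>X. directed X le {b\<in>B. way_below X le b x} \<and>
             is_lub X le {b\<in>B. way_below X le b x} x)"

definition compact_elem :: "'a set \<Rightarrow> ('a \<Rightarrow> 'a \<Rightarrow> bool) \<Rightarrow> 'a \<Rightarrow> bool" where
  "compact_elem X le x \<longleftrightarrow> way_below X le x x"

definition bounded_complete :: "'a set \<Rightarrow> ('a \<Rightarrow> 'a \<Rightarrow> bool) \<Rightarrow> bool" where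
  "bounded_complete X le \<longleftrightarrow>
     (\<forall>F. F \<subseteq> X \<and> finite F \<and> (\<exists>u\<in>X. \<forall>f\<in>F. le f u) \<longrightarrow> (\<exists>s. is_lub X le F s))"

definition scott_domain :: "'a set \<Rightarrow> ('a \<Rightarrow> 'a \<Rightarrow> bool) \<Rightarrow> bool" where
  "scott_domain X le \<longleftrightarrow> dcpo X le \<and> bounded_complete X le \<and>
     (\<exists>B. countable B \<and> is_basis X le B \<and> (\<forall>b\<in>B. compact_elem X le b))"

definition scott_continuous ::
  "'a set \<Rightarrow> ('a \<Rightarrow> 'a \<Rightarrow> bool) \<Rightarrow> 'b set \<Rightarrow> ('b \<Rightarrow> 'b \<Rightarrow> bool) \<Rightarrow> ('a \<Rightarrow> 'b) \<Rightarrow> bool" where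
  "scott_continuous X leX Y leY f \<longleftrightarrow>
     f \<in> X \<rightarrow> Y \<and>
     (\<forall>x\<in>X. \<forall>y\<in>X. leX x y \<longrightarrow> leY (f x) (f y)) \<and>
     (\<forall>D s. directed X leX D \<longrightarrow> is_lub X leX D s \<longrightarrow> is_lub Y leY (f ` D) (f s))"

definition scott_open_sets :: "'a set \<Rightarrow> ('a \<Rightarrow> 'a \<Rightarrow> bool) \<Rightarrow> 'a set set" where
  "scott_open_sets X le = {U. U \<subseteq> X \<and>
     (\<forall>x\<in>U. \<forall>y\<in>X. le x y \<longrightarrow> y \<in> U) \<and>
     (\<forall>x\<in>U. \<exists>y\<in>U. way_below X le y x)}"

definition partial_metric :: "'a set \<Rightarrow> ('a \<Rightarrow> 'a \<Rightarrow> real) \<Rightarrow> bool" where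
  "partial_metric X p \<longleftrightarrow>
     (\<forall>x\<in>X. \<forall>y\<in>X. 0 \<le> p x y) \<and>
     (\<forall>x\<in>X. \<forall>y\<in>X. p x x \<le> p x y) \<and>
     (\<forall>x\<in>X. \<forall>y\<in>X. p x x = p x y \<and> p x y = p y y \<longrightarrow> x = y) \<and>
     (\<forall>x\<in>X. \<forall>y\<in>X. p x y = p y x) \<and>
     (\<forall>x\<in>X. \<forall>y\<in>X. \<forall>z\<in>X. p x y \<le> p x z + p z y - p z z)"

definition pm_ball :: "'a set \<Rightarrow> ('a \<Rightarrow> 'a \<Rightarrow> real) \<Rightarrow> 'a \<Rightarrow> real \<Rightarrow> 'a set" where
  "pm_ball X p x e = {y\<in>X. p y x < p x x + e}"

definition pm_open_sets :: "'a set \<Rightarrow> ('a \<Rightarrow> 'a \<Rightarrow> real) \<Rightarrow> 'a set set" where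
  "pm_open_sets X p = {\<Union>\<B> | \<B>. \<B> \<subseteq> {pm_ball X p x e | x e. x \<in> X \<and> e > 0}}"

definition quantified_by :: "'a set \<Rightarrow> ('a \<Rightarrow> 'a \<Rightarrow> bool) \<Rightarrow> ('a \<Rightarrow> 'a \<Rightarrow> real) \<Rightarrow> bool" where
  "quantified_by X le p \<longleftrightarrow> dcpo X le \<and> partial_metric X p \<and>
     scott_open_sets X le = pm_open_sets X p"

definition fun_space :: "'a set \<Rightarrow> ('a \<Rightarrow> 'a \<Rightarrow> bool) \<Rightarrow> 'b set \<Rightarrow> ('b \<Rightarrow> 'b \<Rightarrow> bool) \<Rightarrow> ('a \<Rightarrow> 'b) set" where
  "fun_space X leX Y leY = {f \<in> extensional X. scott_continuous X leX Y leY f}"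

definition fun_le :: "'a set \<Rightarrow> ('b \<Rightarrow> 'b \<Rightarrow> bool) \<Rightarrow> ('a \<Rightarrow> 'b) \<Rightarrow> ('a \<Rightarrow> 'b) \<Rightarrow> bool" where
  "fun_le X leY f g \<longleftrightarrow> (\<forall>x\<in>X. leY (f x) (g x))"

text \<open>The weighted partial metric; the enumeration a is indexed from 1.\<close>
definition fun_pm :: "real \<Rightarrow> (nat \<Rightarrow> 'a) \<Rightarrow> ('b \<Rightarrow> 'b \<Rightarrow> real) \<Rightarrow> ('a \<Rightarrow> 'b) \<Rightarrow> ('a \<Rightarrow> 'b) \<Rightarrow> real" where
  "fun_pm \<theta> a pY f g = (\<Sum>n. \<theta> ^ (Suc n) * pY (f (a (Suc n))) (g (a (Suc n))))"

end

theory Submission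
  imports Defs
begin


lemma po_refl: "partial_order_on X le \<Longrightarrow> x \<in> X \<Longrightarrow> le x x"
  unfolding partial_order_on_def by blast
lemma po_antisym: "partial_order_on X le \<Longrightarrow> x \<in> X \<Longrightarrow> y \<in> X \<Longrightarrow> le x y \<Longrightarrow> le y x \<Longrightarrow> x = y"
  unfolding partial_order_on_def by blast
lemma po_trans: "partial_order_on X le \<Longrightarrow> x \<in> X \<Longrightarrow> y \<in> X \<Longrightarrow> z \<in> X \<Longrightarrow> le x y \<Longrightarrow> le y z \<Longrightarrow> le x z"
  unfolding partial_order_on_def by blast

lemma lub_unique: "partial_order_on X le \<Longrightarrow> is_lub X le D s \<Longrightarrow> is_lub X le D t \<Longrightarrow> s = t"
  unfolding is_lub_def using po_antisym[of X le s t] by blast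

lemma lub_single: "partial_order_on X le \<Longrightarrow> x \<in> X \<Longrightarrow> is_lub X le {x} x"
  unfolding is_lub_def by (simp add: po_refl)

lemma directed_single: "partial_order_on X le \<Longrightarrow> x \<in> X \<Longrightarrow> directed X le {x}"
  unfolding directed_def by (simp add: po_refl)

lemma wb_le: "partial_order_on X le \<Longrightarrow> y \<in> X \<Longrightarrow> way_below X le x y \<Longrightarrow> le x y"
  unfolding way_below_def using directed_single lub_single po_refl by fastforce

lemma compact_wb:
  assumes "partial_order_on X le" "c \<in> X" "x \<in> X" "compact_elem X le c" "le c x"
  shows "way_below X le c x"
  unfolding way_below_def
proof (intro allI impI)
  fix D s assume d: "directed X le D" and l: "is_lub X le D s" and xs: "le x s"
  have "s \<in> X" using l by (simp add: is_lub_def)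
  then have "le c s" using po_trans[OF assms(1) assms(2) assms(3)] assms(5) xs by blast
  then show "\<exists>d\<in>D. le c d" using assms(4) d l unfolding compact_elem_def way_below_def by blast
qed

lemma wb_lub: "way_below X le c c \<Longrightarrow> directed X le D \<Longrightarrow> is_lub X le D s \<Longrightarrow> le c s \<Longrightarrow> \<exists>d\<in>D. le c d"
  by (simp add: way_below_def)

lemma compact_lub: "compact_elem X le c \<Longrightarrow> directed X le D \<Longrightarrow> is_lub X le D s \<Longrightarrow> le c s \<Longrightarrow> \<exists>d\<in>D. le c d"
  by (simp add: way_below_def compact_elem_def)

lemma compact_in_basis:
  assumes po: "partial_order_on X le" and b: "is_basis X le B" and c: "c \<in> X" "compact_elem X le c"
  shows "c \<in> B"
proof -
  have d: "directed X le {b\<in>B. way_below X le b c}" and l: "is_lub X le {b\<in>B. way_below X le b c} c"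
    using b c unfolding is_basis_def by auto
  obtain d where d1: "d \<in> B" "way_below X le d c" "le c d"
    using compact_lub[OF c(2) d l po_refl[OF po c(1)]] by blast
  have "d \<in> X" using b d1 unfolding is_basis_def by auto
  then have "le d c" using wb_le[OF po c(1) d1(2)] by simp
  then have "d = c" using po_antisym[OF po \<open>d\<in>X\<close> c(1)] d1 by simp
  then show ?thesis using d1 by simp
qed

lemma scott_open_inacc:
  assumes po: "partial_order_on X le" and U: "U \<in> scott_open_sets X le"
    and d: "directed X le D" and l: "is_lub X le D s" and s: "s \<in> U"
  shows "\<exists>d\<in>D. d \<in> U"
proof -
  obtain y where y: "y \<in> U" "way_below X le y s" using U s unfolding scott_open_sets_def by blast
  have sX: "s \<in> X" using l by (simp add: is_lub_def)
  obtain d' where d': "d' \<in> D" "le y d'" using y(2) d l po_refl[OF po sX] unfolding way_below_def by blast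
  have "d' \<in> X" using d d' unfolding directed_def by auto
  then have "d' \<in> U" using U y d' unfolding scott_open_sets_def by blast
  then show ?thesis using d' by blast
qed

lemma upset_open:
  assumes po: "partial_order_on X le" and b: "b \<in> X" "compact_elem X le b"
  shows "{y\<in>X. le b y} \<in> scott_open_sets X le"
  unfolding scott_open_sets_def
proof (safe)
  fix x y assume "x \<in> X" "le b x" "y \<in> X" "le x y"
  then show "le b y" using po_trans[OF po b(1)] by blast
next
  fix x assume "x \<in> X" "le b x"
  then show "\<exists>y\<in>{y \<in> X. le b y}. way_below X le y x"
    using compact_wb[OF po b(1) _ b(2)] b po_refl[OF po] by blast
qed

lemma directed_image:
  assumes "directed X leX D" "f \<in> X \<rightarrow> Y" "\<forall>x\<in>X. \<forall>y\<in>X. leX x y \<longrightarrow> leY (f x) (f y)"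
  shows "directed Y leY (f ` D)"
  using assms unfolding directed_def
proof (intro conjI)
  show "f ` D \<subseteq> Y" using assms unfolding directed_def by auto
  show "f ` D \<noteq> {}" using assms unfolding directed_def by auto
  show "\<forall>x\<in>f ` D. \<forall>y\<in>f ` D. \<exists>z\<in>f ` D. leY x z \<and> leY y z"
  proof (intro ballI)
    fix x y assume "x \<in> f ` D" "y \<in> f ` D"
    then obtain u v where uv: "u \<in> D" "v \<in> D" "x = f u" "y = f v" by blast
    obtain w where w: "w \<in> D" "leX u w" "leX v w" using assms(1) uv unfolding directed_def by meson
    have "u \<in> X" "v \<in> X" "w \<in> X" using assms(1) uv w unfolding directed_def by auto
    then show "\<exists>z\<in>f ` D. leY x z \<and> leY y z" using assms(3) uv w by blast
  qed
qed

lemma directed_finite: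
  assumes d: "directed X le D" and po: "partial_order_on X le" and fin: "finite F"
    and ex: "\<forall>p\<in>F. \<exists>d\<in>D. P p d"
    and up: "\<And>p d d'. P p d \<Longrightarrow> d \<in> D \<Longrightarrow> d' \<in> D \<Longrightarrow> le d d' \<Longrightarrow> P p d'"
  shows "\<exists>d\<in>D. \<forall>p\<in>F. P p d"
  using fin ex
proof (induction F rule: finite_induct)
  case empty
  then show ?case using d unfolding directed_def by auto
next
  case (insert q F)
  obtain d1 where d1: "d1 \<in> D" "\<forall>p\<in>F. P p d1" using insert by auto
  obtain d2 where d2: "d2 \<in> D" "P q d2" using insert by auto
  obtain d3 where d3: "d3 \<in> D" "le d1 d3" "le d2 d3" using d d1 d2 unfolding directed_def by meson
  show ?case using d1 d2 d3 up by blast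
qed

lemma finite_min_pos:
  assumes "finite F" "\<forall>p\<in>F. \<exists>e>(0::real). Q p e" "\<And>p e e'. Q p e \<Longrightarrow> 0 < e' \<Longrightarrow> e' \<le> e \<Longrightarrow> Q p e'"
  shows "\<exists>e>0. \<forall>p\<in>F. Q p e"
  using assms(1,2)
proof (induction F rule: finite_induct)
  case empty
  then show ?case by (auto intro: exI[of _ 1])
next
  case (insert q F)
  obtain e1 where e1: "e1 > 0" "\<forall>p\<in>F. Q p e1" using insert by auto
  obtain e2 where e2: "e2 > 0" "Q q e2" using insert by auto
  show ?case
  proof (intro exI[of _ "min e1 e2"] conjI ballI)
    show "0 < min e1 e2" using e1 e2 by simp
    fix p assume "p \<in> insert q F"
    then show "Q p (min e1 e2)"
    proof
      assume "p = q" then show ?thesis using e2 assms(3)[of q e2 "min e1 e2"] e1 by simp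
    next
      assume "p \<in> F" then show ?thesis using e1 assms(3)[of p e1 "min e1 e2"] e2 by simp
    qed
  qed
qed

locale qpm =
  fixes Y :: "'b set" and leY :: "'b \<Rightarrow> 'b \<Rightarrow> bool" and pY :: "'b \<Rightarrow> 'b \<Rightarrow> real"
  assumes q: "quantified_by Y leY pY"
begin

lemma poY: "partial_order_on Y leY" using q by (simp add: quantified_by_def dcpo_def)
lemma pm: "partial_metric Y pY" using q by (simp add: quantified_by_def)
lemma opens: "scott_open_sets Y leY = pm_open_sets Y pY" using q by (simp add: quantified_by_def)

lemma p_nonneg: "x \<in> Y \<Longrightarrow> y \<in> Y \<Longrightarrow> 0 \<le> pY x y" using pm by (simp add: partial_metric_def)
lemma p_self_le: "x \<in> Y \<Longrightarrow> y \<in> Y \<Longrightarrow> pY x x \<le> pY x y" using pm by (simp add: partial_metric_def)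
lemma p_sym: "x \<in> Y \<Longrightarrow> y \<in> Y \<Longrightarrow> pY x y = pY y x" using pm by (simp add: partial_metric_def)
lemma p_sep: "x \<in> Y \<Longrightarrow> y \<in> Y \<Longrightarrow> pY x x = pY x y \<Longrightarrow> pY x y = pY y y \<Longrightarrow> x = y"
  using pm by (simp add: partial_metric_def)
lemma p_tri: "x \<in> Y \<Longrightarrow> y \<in> Y \<Longrightarrow> z \<in> Y \<Longrightarrow> pY x y \<le> pY x z + pY z y - pY z z"
  using pm unfolding partial_metric_def by blast

lemma ball_open: "x \<in> Y \<Longrightarrow> 0 < e \<Longrightarrow> pm_ball Y pY x e \<in> scott_open_sets Y leY"
  unfolding opens pm_open_sets_def
  by (rule CollectI, rule exI[of _ "{pm_ball Y pY x e}"]) auto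

lemma open_ball_inside:
  assumes V: "V \<in> scott_open_sets Y leY" and w: "w \<in> V"
  shows "\<exists>\<eta>>0. pm_ball Y pY w \<eta> \<subseteq> V"
proof -
  obtain B where B: "V = \<Union>B" "B \<subseteq> {pm_ball Y pY x e | x e. x \<in> Y \<and> e > 0}"
    using V unfolding opens pm_open_sets_def by blast
  obtain z \<delta> where z: "z \<in> Y" "\<delta> > 0" "w \<in> pm_ball Y pY z \<delta>" "pm_ball Y pY z \<delta> \<subseteq> V"
    using B w by blast
  have wY: "w \<in> Y" and wz: "pY w z < pY z z + \<delta>" using z(3) by (auto simp: pm_ball_def)
  define \<eta> where "\<eta> = pY z z + \<delta> - pY w z"
  have "pm_ball Y pY w \<eta> \<subseteq> pm_ball Y pY z \<delta>"
  proof
    fix y assume "y \<in> pm_ball Y pY w \<eta>"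
    then have y: "y \<in> Y" "pY y w < pY w w + \<eta>" by (auto simp: pm_ball_def)
    have "pY y z \<le> pY y w + pY w z - pY w w" using p_tri[OF y(1) z(1) wY] .
    then show "y \<in> pm_ball Y pY z \<delta>" using y unfolding pm_ball_def \<eta>_def by auto
  qed
  moreover have "\<eta> > 0" using wz \<eta>_def by simp
  ultimately show ?thesis using z(4) by blast
qed

lemma le_p:
  assumes x: "x \<in> Y" and y: "y \<in> Y" and le: "leY x y"
  shows "pY x y = pY x x"
proof -
  have "pY y x \<le> pY x x"
  proof (rule field_le_epsilon)
    fix e :: real assume e: "0 < e"
    have U: "pm_ball Y pY x e \<in> scott_open_sets Y leY" using ball_open[OF x e] .
    have "x \<in> pm_ball Y pY x e" using x e by (simp add: pm_ball_def)
    then have "y \<in> pm_ball Y pY x e" using U y le unfolding scott_open_sets_def by blast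
    then show "pY y x \<le> pY x x + e" by (simp add: pm_ball_def)
  qed
  then show ?thesis using p_self_le[OF x y] p_sym[OF x y] by simp
qed

lemma anti:
  assumes x: "x \<in> Y" and y: "y \<in> Y" and z: "z \<in> Y" and le: "leY x y"
  shows "pY y z \<le> pY x z"
  using p_tri[OF y z x] le_p[OF x y le] p_sym[OF x y] by simp

lemma lower_cont:
  assumes d: "directed Y leY D" and l: "is_lub Y leY D s" and z: "z \<in> Y" and t: "pY s z < t"
  shows "\<exists>d\<in>D. pY d z < t"
proof -
  have sY: "s \<in> Y" using l by (simp add: is_lub_def)
  have "pY z z \<le> pY s z" using p_self_le[OF z sY] p_sym[OF z sY] by simp
  then have e: "t - pY z z > 0" using t by simp
  have "s \<in> pm_ball Y pY z (t - pY z z)" using sY t by (simp add: pm_ball_def)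
  then obtain d where "d \<in> D" "d \<in> pm_ball Y pY z (t - pY z z)"
    using scott_open_inacc[OF poY ball_open[OF z e] d l] by blast
  then show ?thesis by (auto simp: pm_ball_def)
qed

end



locale setting = qpm +
  fixes X :: "'a set" and leX :: "'a \<Rightarrow> 'a \<Rightarrow> bool" and BX :: "'a set" and BY :: "'b set"
  assumes poX: "partial_order_on X leX"
    and basisX: "is_basis X leX BX" and compX: "\<forall>b\<in>BX. compact_elem X leX b"
    and basisY: "is_basis Y leY BY" and compY: "\<forall>b\<in>BY. compact_elem Y leY b"
    and dcpoY: "dcpo Y leY" and bcY: "bounded_complete Y leY"
begin

abbreviation "FS \<equiv> fun_space X leX Y leY"
abbreviation "FL \<equiv> fun_le X leY"

lemma FS_D:
  assumes "f \<in> FS"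
  shows "f \<in> extensional X" "f \<in> X \<rightarrow> Y"
    "\<And>x y. x \<in> X \<Longrightarrow> y \<in> X \<Longrightarrow> leX x y \<Longrightarrow> leY (f x) (f y)"
    "\<And>D s. directed X leX D \<Longrightarrow> is_lub X leX D s \<Longrightarrow> is_lub Y leY (f ` D) (f s)"
  using assms unfolding fun_space_def scott_continuous_def by auto

lemma FS_app: "f \<in> FS \<Longrightarrow> x \<in> X \<Longrightarrow> f x \<in> Y"
  using FS_D(2) by blast

lemma FS_I:
  assumes "f \<in> extensional X" "f \<in> X \<rightarrow> Y"
    "\<And>x y. x \<in> X \<Longrightarrow> y \<in> X \<Longrightarrow> leX x y \<Longrightarrow> leY (f x) (f y)"
    "\<And>D s. directed X leX D \<Longrightarrow> is_lub X leX D s \<Longrightarrow> is_lub Y leY (f ` D) (f s)"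
  shows "f \<in> FS"
  using assms unfolding fun_space_def scott_continuous_def by auto

lemma poFS: "partial_order_on FS FL"
  unfolding partial_order_on_def
proof (intro conjI ballI impI)
  fix f assume "f \<in> FS"
  then show "FL f f" unfolding fun_le_def using po_refl[OF poY] FS_app by blast
next
  fix f g assume f: "f \<in> FS" and g: "g \<in> FS" and fg: "FL f g \<and> FL g f"
  show "f = g"
  proof (rule extensionalityI[OF FS_D(1)[OF f] FS_D(1)[OF g]])
    fix x assume "x \<in> X"
    then show "f x = g x" using po_antisym[OF poY FS_app[OF f] FS_app[OF g]] fg
      unfolding fun_le_def by blast
  qed
next
  fix f g h assume f: "f \<in> FS" and g: "g \<in> FS" and h: "h \<in> FS" and fg: "FL f g \<and> FL g h"
  show "FL f h" unfolding fun_le_def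
  proof
    fix x assume "x \<in> X"
    then show "leY (f x) (h x)" using po_trans[OF poY FS_app[OF f] FS_app[OF g] FS_app[OF h]] fg
      unfolding fun_le_def by blast
  qed
qed

lemma basisX_at: "x \<in> X \<Longrightarrow> directed X leX {c\<in>BX. way_below X leX c x} \<and> is_lub X leX {c\<in>BX. way_below X leX c x} x"
  using basisX unfolding is_basis_def by blast

lemma basisY_at: "y \<in> Y \<Longrightarrow> directed Y leY {b\<in>BY. way_below Y leY b y} \<and> is_lub Y leY {b\<in>BY. way_below Y leY b y} y"
  using basisY unfolding is_basis_def by blast

lemma BX_sub: "BX \<subseteq> X" using basisX unfolding is_basis_def by blast
lemma BY_sub: "BY \<subseteq> Y" using basisY unfolding is_basis_def by blast

lemma f_basis:
  assumes f: "f \<in> FS" and x: "x \<in> X"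
  shows "directed Y leY (f ` {c\<in>BX. way_below X leX c x}) \<and> is_lub Y leY (f ` {c\<in>BX. way_below X leX c x}) (f x)"
  using directed_image[of X leX _ f Y leY] FS_D[OF f] basisX_at[OF x] by blast

subsection \<open>dcpo structure\<close>

definition supf :: "('a \<Rightarrow> 'b) set \<Rightarrow> 'a \<Rightarrow> 'b" where
  "supf D = restrict (\<lambda>x. SOME s. is_lub Y leY ((\<lambda>d. d x) ` D) s) X"

lemma dirFS_sub: "directed FS FL D \<Longrightarrow> D \<subseteq> FS" by (simp add: directed_def)

lemma dir_pt:
  assumes D: "directed FS FL D" and x: "x \<in> X"
  shows "directed Y leY ((\<lambda>d. d x) ` D)"
  unfolding directed_def
proof (intro conjI)
  show "(\<lambda>d. d x) ` D \<subseteq> Y" using dirFS_sub[OF D] FS_app x by blast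
  show "(\<lambda>d. d x) ` D \<noteq> {}" using D by (simp add: directed_def)
  show "\<forall>u\<in>(\<lambda>d. d x) ` D. \<forall>v\<in>(\<lambda>d. d x) ` D. \<exists>z\<in>(\<lambda>d. d x) ` D. leY u z \<and> leY v z"
  proof (intro ballI)
    fix u v assume "u \<in> (\<lambda>d. d x) ` D" "v \<in> (\<lambda>d. d x) ` D"
    then obtain d1 d2 where "d1 \<in> D" "d2 \<in> D" "u = d1 x" "v = d2 x" by blast
    moreover obtain d3 where "d3 \<in> D" "FL d1 d3" "FL d2 d3" using D \<open>d1 \<in> D\<close> \<open>d2 \<in> D\<close>
      unfolding directed_def by meson
    ultimately show "\<exists>z\<in>(\<lambda>d. d x) ` D. leY u z \<and> leY v z" using x unfolding fun_le_def by blast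
  qed
qed

lemma supf_pt:
  assumes D: "directed FS FL D" and x: "x \<in> X"
  shows "is_lub Y leY ((\<lambda>d. d x) ` D) (supf D x)"
proof -
  have "\<exists>s. is_lub Y leY ((\<lambda>d. d x) ` D) s" using dcpoY dir_pt[OF D x] unfolding dcpo_def by blast
  then show ?thesis unfolding supf_def using x by (simp add: someI_ex)
qed

lemma lubD: "is_lub Y leY T s \<Longrightarrow> s \<in> Y" "is_lub Y leY T s \<Longrightarrow> t \<in> T \<Longrightarrow> leY t s"
  "is_lub Y leY T s \<Longrightarrow> u \<in> Y \<Longrightarrow> (\<And>t. t \<in> T \<Longrightarrow> leY t u) \<Longrightarrow> leY s u"
  unfolding is_lub_def by auto

lemma supf_mono:
  assumes D: "directed FS FL D" and x: "x \<in> X" and y: "y \<in> X" and xy: "leX x y"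
  shows "leY (supf D x) (supf D y)"
proof (rule lubD(3)[OF supf_pt[OF D x] lubD(1)[OF supf_pt[OF D y]]])
  fix t assume "t \<in> (\<lambda>d. d x) ` D"
  then obtain d where d: "d \<in> D" "t = d x" by blast
  have dF: "d \<in> FS" using d dirFS_sub[OF D] by blast
  have "leY (d x) (d y)" using FS_D(3)[OF dF x y xy] .
  moreover have "leY (d y) (supf D y)" using lubD(2)[OF supf_pt[OF D y]] d by blast
  ultimately show "leY t (supf D y)"
    using po_trans[OF poY FS_app[OF dF x] FS_app[OF dF y] lubD(1)[OF supf_pt[OF D y]]] d by blast
qed

lemma supf_FS:
  assumes D: "directed FS FL D"
  shows "supf D \<in> FS"
proof (rule FS_I)
  show "supf D \<in> extensional X" unfolding supf_def by simp
  show "supf D \<in> X \<rightarrow> Y" using lubD(1)[OF supf_pt[OF D]] by blast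
  show "\<And>x y. x \<in> X \<Longrightarrow> y \<in> X \<Longrightarrow> leX x y \<Longrightarrow> leY (supf D x) (supf D y)"
    using supf_mono[OF D] by blast
next
  fix E e assume E: "directed X leX E" and e: "is_lub X leX E e"
  have EX: "E \<subseteq> X" using E by (simp add: directed_def)
  have eX: "e \<in> X" using e by (simp add: is_lub_def)
  have le_e: "\<And>x. x \<in> E \<Longrightarrow> leX x e" using e by (simp add: is_lub_def)
  show "is_lub Y leY (supf D ` E) (supf D e)"
    unfolding is_lub_def
  proof (intro conjI ballI impI)
    show "supf D e \<in> Y" using lubD(1)[OF supf_pt[OF D eX]] .
    fix t assume "t \<in> supf D ` E"
    then show "leY t (supf D e)" using supf_mono[OF D _ eX] le_e EX by blast
  next
    fix u assume u: "u \<in> Y" and ub: "\<forall>t\<in>supf D ` E. leY t u"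
    show "leY (supf D e) u"
    proof (rule lubD(3)[OF supf_pt[OF D eX] u])
      fix t assume "t \<in> (\<lambda>d. d e) ` D"
      then obtain d where d: "d \<in> D" "t = d e" by blast
      have dF: "d \<in> FS" using d dirFS_sub[OF D] by blast
      have l: "is_lub Y leY (d ` E) (d e)" using FS_D(4)[OF dF E e] .
      show "leY t u"
      proof (rule lubD(3)[OF l u, folded d(2)])
        fix s assume "s \<in> d ` E"
        then obtain x where x: "x \<in> E" "s = d x" by blast
        have xX: "x \<in> X" using x EX by blast
        have "leY (d x) (supf D x)" using lubD(2)[OF supf_pt[OF D xX]] d by blast
        moreover have "leY (supf D x) u" using ub x by blast
        ultimately show "leY s u"
          using po_trans[OF poY FS_app[OF dF xX] lubD(1)[OF supf_pt[OF D xX]] u] x by blast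
      qed
    qed
  qed
qed

lemma supf_lub:
  assumes D: "directed FS FL D"
  shows "is_lub FS FL D (supf D)"
  unfolding is_lub_def
proof (intro conjI ballI impI)
  show "supf D \<in> FS" using supf_FS[OF D] .
  fix d assume "d \<in> D"
  then show "FL d (supf D)" unfolding fun_le_def using lubD(2)[OF supf_pt[OF D]] by blast
next
  fix u assume u: "u \<in> FS" and ub: "\<forall>d\<in>D. FL d u"
  show "FL (supf D) u" unfolding fun_le_def
  proof
    fix x assume x: "x \<in> X"
    show "leY (supf D x) (u x)"
      by (rule lubD(3)[OF supf_pt[OF D x] FS_app[OF u x]]) (use ub x in \<open>auto simp: fun_le_def\<close>)
  qed
qed

lemma lub_pt:
  assumes D: "directed FS FL D" and h: "is_lub FS FL D h" and x: "x \<in> X"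
  shows "is_lub Y leY ((\<lambda>d. d x) ` D) (h x)"
  using lub_unique[OF poFS h supf_lub[OF D]] supf_pt[OF D x] by simp

lemma dcpoFS: "dcpo FS FL"
  unfolding dcpo_def using poFS supf_lub by blast

end



context setting
begin

definition below_set :: "('a \<times> 'b) set \<Rightarrow> 'a \<Rightarrow> 'b set" where
  "below_set F x = {b. \<exists>c. (c, b) \<in> F \<and> leX c x}"

definition step :: "('a \<times> 'b) set \<Rightarrow> 'a \<Rightarrow> 'b" where
  "step F = restrict (\<lambda>x. SOME s. is_lub Y leY (below_set F x) s) X"

definition adm :: "('a \<Rightarrow> 'b) \<Rightarrow> ('a \<times> 'b) set \<Rightarrow> bool" where
  "adm f F \<longleftrightarrow> finite F \<and> (\<forall>p\<in>F. fst p \<in> X \<and> compact_elem X leX (fst p) \<and> snd p \<in> Y \<and>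
      compact_elem Y leY (snd p) \<and> leY (snd p) (f (fst p)))"

lemma admD: "adm f F \<Longrightarrow> (c, b) \<in> F \<Longrightarrow> c \<in> X \<and> compact_elem X leX c \<and> b \<in> Y \<and>
      compact_elem Y leY b \<and> leY b (f c)"
  unfolding adm_def by force

lemma step_lub:
  assumes f: "f \<in> FS" and F: "adm f F" and x: "x \<in> X"
  shows "is_lub Y leY (below_set F x) (step F x)"
proof -
  have fin: "finite (below_set F x)"
  proof (rule finite_subset)
    show "below_set F x \<subseteq> snd ` F" unfolding below_set_def by force
    show "finite (snd ` F)" using F unfolding adm_def by simp
  qed
  have sub: "below_set F x \<subseteq> Y" using admD[OF F] unfolding below_set_def by blast
  have ub: "\<forall>b\<in>below_set F x. leY b (f x)"
  proof
    fix b assume "b \<in> below_set F x"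
    then obtain c where c: "(c, b) \<in> F" "leX c x" unfolding below_set_def by blast
    have "leY (f c) (f x)" using FS_D(3)[OF f _ x c(2)] admD[OF F c(1)] by blast
    then show "leY b (f x)" using po_trans[OF poY _ FS_app[OF f] FS_app[OF f x]] admD[OF F c(1)] by blast
  qed
  have "\<exists>s. is_lub Y leY (below_set F x) s"
    using bcY fin sub ub FS_app[OF f x] unfolding bounded_complete_def by blast
  then show ?thesis unfolding step_def using x by (simp add: someI_ex)
qed

lemma step_le_f: "f \<in> FS \<Longrightarrow> adm f F \<Longrightarrow> x \<in> X \<Longrightarrow> leY (step F x) (f x)"
proof (rule lubD(3)[OF step_lub FS_app], assumption+)
  fix b assume f: "f \<in> FS" and F: "adm f F" and x: "x \<in> X" and "b \<in> below_set F x"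
  then obtain c where c: "(c, b) \<in> F" "leX c x" unfolding below_set_def by blast
  have "leY (f c) (f x)" using FS_D(3)[OF f _ x c(2)] admD[OF F c(1)] by blast
  then show "leY b (f x)" using po_trans[OF poY _ FS_app[OF f] FS_app[OF f x]] admD[OF F c(1)] by blast
qed

lemma step_ge: "f \<in> FS \<Longrightarrow> adm f F \<Longrightarrow> x \<in> X \<Longrightarrow> (c, b) \<in> F \<Longrightarrow> leX c x \<Longrightarrow> leY b (step F x)"
  using lubD(2)[OF step_lub] unfolding below_set_def by blast

lemma step_mono:
  assumes f: "f \<in> FS" and F: "adm f F" and x: "x \<in> X" and y: "y \<in> X" and xy: "leX x y"
  shows "leY (step F x) (step F y)"
proof (rule lubD(3)[OF step_lub[OF f F x] lubD(1)[OF step_lub[OF f F y]]])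
  fix b assume "b \<in> below_set F x"
  then obtain c where c: "(c, b) \<in> F" "leX c x" unfolding below_set_def by blast
  have "leX c y" using po_trans[OF poX _ x y c(2) xy] admD[OF F c(1)] by blast
  then show "leY b (step F y)" using step_ge[OF f F y c(1)] by blast
qed

lemma step_FS:
  assumes f: "f \<in> FS" and F: "adm f F"
  shows "step F \<in> FS"
proof (rule FS_I)
  show "step F \<in> extensional X" unfolding step_def by simp
  show "step F \<in> X \<rightarrow> Y" using lubD(1)[OF step_lub[OF f F]] by blast
  show "\<And>x y. x \<in> X \<Longrightarrow> y \<in> X \<Longrightarrow> leX x y \<Longrightarrow> leY (step F x) (step F y)"
    using step_mono[OF f F] by blast
next
  fix E e assume E: "directed X leX E" and e: "is_lub X leX E e"
  have EX: "E \<subseteq> X" using E by (simp add: directed_def)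
  have eX: "e \<in> X" using e by (simp add: is_lub_def)
  have le_e: "\<And>x. x \<in> E \<Longrightarrow> leX x e" using e by (simp add: is_lub_def)
  show "is_lub Y leY (step F ` E) (step F e)"
    unfolding is_lub_def
  proof (intro conjI ballI impI)
    show "step F e \<in> Y" using lubD(1)[OF step_lub[OF f F eX]] .
    fix t assume "t \<in> step F ` E"
    then show "leY t (step F e)" using step_mono[OF f F _ eX] le_e EX by blast
  next
    fix u assume u: "u \<in> Y" and ub: "\<forall>t\<in>step F ` E. leY t u"
    show "leY (step F e) u"
    proof (rule lubD(3)[OF step_lub[OF f F eX] u])
      fix b assume "b \<in> below_set F e"
      then obtain c where c: "(c, b) \<in> F" "leX c e" unfolding below_set_def by blast
      obtain x where x: "x \<in> E" "leX c x" using compact_lub[OF _ E e c(2)] admD[OF F c(1)] by blast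
      have xX: "x \<in> X" using x EX by blast
      have "leY b (step F x)" using step_ge[OF f F xX c(1) x(2)] .
      moreover have "leY (step F x) u" using ub x by blast
      ultimately show "leY b u"
        using po_trans[OF poY _ lubD(1)[OF step_lub[OF f F xX]] u] admD[OF F c(1)] by blast
    qed
  qed
qed

lemma step_FL_f: "f \<in> FS \<Longrightarrow> adm f F \<Longrightarrow> FL (step F) f"
  unfolding fun_le_def using step_le_f by blast

lemma step_FL:
  assumes f: "f \<in> FS" and F: "adm f F" and h: "h \<in> FS"
    and hb: "\<And>c b. (c, b) \<in> F \<Longrightarrow> leY b (h c)"
  shows "FL (step F) h"
  unfolding fun_le_def
proof
  fix x assume x: "x \<in> X"
  show "leY (step F x) (h x)"
  proof (rule lubD(3)[OF step_lub[OF f F x] FS_app[OF h x]])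
    fix b assume "b \<in> below_set F x"
    then obtain c where c: "(c, b) \<in> F" "leX c x" unfolding below_set_def by blast
    have cX: "c \<in> X" using admD[OF F c(1)] by blast
    have "leY (h c) (h x)" using FS_D(3)[OF h cX x c(2)] .
    then show "leY b (h x)" using po_trans[OF poY _ FS_app[OF h cX] FS_app[OF h x]] admD[OF F c(1)] hb[OF c(1)] by blast
  qed
qed

lemma step_wb:
  assumes f: "f \<in> FS" and F: "adm f F"
  shows "way_below FS FL (step F) f"
  unfolding way_below_def
proof (intro allI impI)
  fix D h assume D: "directed FS FL D" and h: "is_lub FS FL D h" and fh: "FL f h"
  have hF: "h \<in> FS" using h by (simp add: is_lub_def)
  have ex: "\<forall>p\<in>F. \<exists>d\<in>D. leY (snd p) (d (fst p))"
  proof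
    fix p assume p: "p \<in> F"
    obtain c b where cb: "p = (c, b)" by fastforce
    have a: "c \<in> X" "compact_elem Y leY b" "b \<in> Y" "leY b (f c)" using admD[OF F p[unfolded cb]] by auto
    have "leY (f c) (h c)" using fh a(1) unfolding fun_le_def by blast
    then have "leY b (h c)" using po_trans[OF poY a(3) FS_app[OF f a(1)] FS_app[OF hF a(1)]] a by blast
    then obtain t where "t \<in> (\<lambda>d. d c) ` D" "leY b t"
      using compact_lub[OF a(2) dir_pt[OF D a(1)] lub_pt[OF D h a(1)]] by blast
    then show "\<exists>d\<in>D. leY (snd p) (d (fst p))" using cb by auto
  qed
  have up: "\<And>p d d'. leY (snd p) (d (fst p)) \<Longrightarrow> d \<in> D \<Longrightarrow> d' \<in> D \<Longrightarrow> FL d d' \<Longrightarrow> p \<in> F \<Longrightarrow> leY (snd p) (d' (fst p))"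
  proof -
    fix p d d' assume 1: "leY (snd p) (d (fst p))" "d \<in> D" "d' \<in> D" "FL d d'" "p \<in> F"
    have a: "fst p \<in> X" "snd p \<in> Y" using admD[of f F "fst p" "snd p"] F 1(5) by auto
    have dF: "d \<in> FS" "d' \<in> FS" using 1 dirFS_sub[OF D] by auto
    have "leY (d (fst p)) (d' (fst p))" using 1(4) a unfolding fun_le_def by blast
    then show "leY (snd p) (d' (fst p))"
      using po_trans[OF poY a(2) FS_app[OF dF(1) a(1)] FS_app[OF dF(2) a(1)]] 1(1) by blast
  qed
  obtain d where d: "d \<in> D" "\<forall>p\<in>F. leY (snd p) (d (fst p))"
    using directed_finite[OF D poFS, of F "\<lambda>p d. p \<in> F \<longrightarrow> leY (snd p) (d (fst p))"] ex up F
    unfolding adm_def by blast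
  have "FL (step F) d" using step_FL[OF f F] d dirFS_sub[OF D] by fastforce
  then show "\<exists>d\<in>D. FL (step F) d" using d by blast
qed

lemma adm_un: "adm f F \<Longrightarrow> adm f G \<Longrightarrow> adm f (F \<union> G)"
  unfolding adm_def by auto

lemma fam_dir:
  assumes f: "f \<in> FS"
  shows "directed FS FL (step ` {F. adm f F})"
  unfolding directed_def
proof (intro conjI)
  show "step ` {F. adm f F} \<subseteq> FS" using step_FS[OF f] by blast
  have "adm f {}" unfolding adm_def by simp
  then show "step ` {F. adm f F} \<noteq> {}" by blast
  show "\<forall>x\<in>step ` {F. adm f F}. \<forall>y\<in>step ` {F. adm f F}. \<exists>z\<in>step ` {F. adm f F}. FL x z \<and> FL y z"
  proof (intro ballI)
    fix x y assume "x \<in> step ` {F. adm f F}" "y \<in> step ` {F. adm f F}"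
    then obtain F G where FG: "adm f F" "adm f G" "x = step F" "y = step G" by blast
    have U: "adm f (F \<union> G)" using adm_un FG by blast
    have SU: "step (F \<union> G) \<in> FS" using step_FS[OF f U] .
    have "FL (step F) (step (F \<union> G))"
      by (rule step_FL[OF f FG(1) SU]) (use step_ge[OF f U] admD[OF FG(1)] po_refl[OF poX] in blast)
    moreover have "FL (step G) (step (F \<union> G))"
      by (rule step_FL[OF f FG(2) SU]) (use step_ge[OF f U] admD[OF FG(2)] po_refl[OF poX] in blast)
    ultimately show "\<exists>z\<in>step ` {F. adm f F}. FL x z \<and> FL y z" using U FG by blast
  qed
qed

lemma fam_lub:
  assumes f: "f \<in> FS"
  shows "is_lub FS FL (step ` {F. adm f F}) f"
  unfolding is_lub_def
proof (intro conjI ballI impI)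
  show "f \<in> FS" using f .
  fix s assume "s \<in> step ` {F. adm f F}"
  then show "FL s f" using step_FL_f[OF f] by blast
next
  fix u assume u: "u \<in> FS" and ub: "\<forall>s\<in>step ` {F. adm f F}. FL s u"
  show "FL f u" unfolding fun_le_def
  proof
    fix x assume x: "x \<in> X"
    show "leY (f x) (u x)"
    proof (rule lubD(3)[OF conjunct2[OF f_basis[OF f x]] FS_app[OF u x]])
      fix t assume "t \<in> f ` {c \<in> BX. way_below X leX c x}"
      then obtain c where c: "c \<in> BX" "way_below X leX c x" "t = f c" by blast
      have cX: "c \<in> X" using c BX_sub by blast
      have cx: "leX c x" using wb_le[OF poX x c(2)] .
      show "leY t (u x)"
        unfolding c(3)
      proof (rule lubD(3)[OF conjunct2[OF basisY_at[OF FS_app[OF f cX]]] FS_app[OF u x]])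
        fix b assume "b \<in> {b \<in> BY. way_below Y leY b (f c)}"
        then have b: "b \<in> BY" "way_below Y leY b (f c)" by auto
        have bY: "b \<in> Y" using b BY_sub by blast
        have A: "adm f {(c, b)}" unfolding adm_def
          using cX c(1) compX b compY bY wb_le[OF poY FS_app[OF f cX] b(2)] by auto
        have "leY b (step {(c, b)} x)" using step_ge[OF f A x _ cx] by simp
        moreover have "FL (step {(c, b)}) u" using ub A by blast
        ultimately show "leY b (u x)"
          using po_trans[OF poY bY lubD(1)[OF step_lub[OF f A x]] FS_app[OF u x]] x
          unfolding fun_le_def by blast
      qed
    qed
  qed
qed

end



locale setting2 = setting +
  fixes \<theta> :: real and a :: "nat \<Rightarrow> 'b"
  assumes th0: "0 < \<theta>" and th1: "\<theta> \<le> 1/2"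
    and pbound: "\<forall>x\<in>Y. \<forall>y\<in>Y. pY x y \<le> 1"
    and a_basis: "is_basis X leX (a ` {1..})"
begin

abbreviation "P \<equiv> fun_pm \<theta> a pY"

lemma aX: "a (Suc n) \<in> X" using a_basis unfolding is_basis_def by auto

lemma compact_idx: "c \<in> X \<Longrightarrow> compact_elem X leX c \<Longrightarrow> \<exists>m. c = a (Suc m)"
proof -
  assume "c \<in> X" "compact_elem X leX c"
  then have "c \<in> a ` {1..}" using compact_in_basis[OF poX a_basis] by blast
  then obtain k where "k \<ge> 1" "c = a k" by auto
  then have "c = a (Suc (k - 1))" by simp
  then show ?thesis by blast
qed

definition tm where
  "tm f g n = \<theta> ^ Suc n * pY (f (a (Suc n))) (g (a (Suc n)))"

lemma P_eq: "P f g = suminf (tm f g)"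
  unfolding fun_pm_def tm_def by simp

lemma geo: "summable (\<lambda>n. \<theta> ^ Suc n)" "(\<Sum>n. \<theta> ^ Suc n) \<le> 1"
proof -
  have n: "norm \<theta> < 1" using th0 th1 by simp
  have s: "summable (\<lambda>n. \<theta> * \<theta> ^ n)" using summable_mult[OF summable_geometric[OF n]] .
  then show "summable (\<lambda>n. \<theta> ^ Suc n)" by simp
  have "(\<Sum>n. \<theta> * \<theta> ^ n) = \<theta> * (1 / (1 - \<theta>))"
    using suminf_mult[OF summable_geometric[OF n]] suminf_geometric[OF n] by simp
  also have "\<dots> \<le> 1" using th0 th1 by (simp add: field_simps)
  finally show "(\<Sum>n. \<theta> ^ Suc n) \<le> 1" by simp
qed

lemma tm_bounds:
  assumes "f \<in> FS" "g \<in> FS"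
  shows "0 \<le> tm f g n" "tm f g n \<le> \<theta> ^ Suc n"
proof -
  have y: "f (a (Suc n)) \<in> Y" "g (a (Suc n)) \<in> Y" using FS_app assms aX by auto
  have "0 \<le> pY (f (a (Suc n))) (g (a (Suc n)))" using p_nonneg y by blast
  then show "0 \<le> tm f g n" unfolding tm_def using th0 by simp
  have "pY (f (a (Suc n))) (g (a (Suc n))) \<le> 1" using pbound y by blast
  then show "tm f g n \<le> \<theta> ^ Suc n" unfolding tm_def using th0
    using mult_left_mono[of _ 1 "\<theta> ^ Suc n"] by simp
qed

lemma tm_summable: "f \<in> FS \<Longrightarrow> g \<in> FS \<Longrightarrow> summable (tm f g)"
  by (rule summable_comparison_test[OF _ geo(1)]) (use tm_bounds in auto)

lemma P_diff: "f \<in> FS \<Longrightarrow> g \<in> FS \<Longrightarrow> h \<in> FS \<Longrightarrow> k \<in> FS \<Longrightarrow>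
   P f g - P h k = (\<Sum>n. tm f g n - tm h k n)"
  unfolding P_eq using suminf_diff tm_summable by blast

lemma eq_on_basis:
  assumes f: "f \<in> FS" and g: "g \<in> FS" and eq: "\<And>n. f (a (Suc n)) = g (a (Suc n))"
  shows "f = g"
proof (rule extensionalityI[OF FS_D(1)[OF f] FS_D(1)[OF g]])
  fix x assume x: "x \<in> X"
  let ?E = "{b \<in> a ` {1..}. way_below X leX b x}"
  have E: "directed X leX ?E" "is_lub X leX ?E x" using a_basis x unfolding is_basis_def by auto
  have "f ` ?E = g ` ?E"
  proof -
    have "\<And>b. b \<in> a ` {1..} \<Longrightarrow> f b = g b"
    proof -
      fix b assume "b \<in> a ` {1..}"
      then obtain k where "k \<ge> 1" "b = a k" by auto
      then have "b = a (Suc (k - 1))" by simp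
      then show "f b = g b" using eq by simp
    qed
    then show ?thesis by (intro image_cong) auto
  qed
  moreover have "is_lub Y leY (g ` ?E) (g x)" using FS_D(4)[OF g E] .
  ultimately have "is_lub Y leY (f ` ?E) (g x)" by simp
  then show "f x = g x" using lub_unique[OF poY FS_D(4)[OF f E]] by simp
qed

lemma P_sym: "f \<in> FS \<Longrightarrow> g \<in> FS \<Longrightarrow> P f g = P g f"
  unfolding P_eq tm_def using p_sym FS_app aX by simp

lemma pm_FS: "partial_metric FS P"
  unfolding partial_metric_def
proof (intro conjI ballI impI)
  fix f g assume f: "f \<in> FS" and g: "g \<in> FS"
  show "0 \<le> P f g" unfolding P_eq using suminf_nonneg[OF tm_summable[OF f g]] tm_bounds[OF f g] by blast
  have le: "\<And>n. tm f f n \<le> tm f g n" unfolding tm_def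
    using p_self_le FS_app[OF f aX] FS_app[OF g aX] th0 by (simp add: mult_left_mono)
  show "P f f \<le> P f g" unfolding P_eq by (rule suminf_le[OF le tm_summable[OF f f] tm_summable[OF f g]])
  show "P f g = P g f" unfolding P_eq tm_def using p_sym FS_app[OF f aX] FS_app[OF g aX] by simp
next
  fix f g assume f: "f \<in> FS" and g: "g \<in> FS" and e: "P f f = P f g \<and> P f g = P g g"
  have zero: "\<And>u v. u \<in> FS \<Longrightarrow> v \<in> FS \<Longrightarrow> P u u = P u v \<Longrightarrow> (\<forall>n. tm u v n - tm u u n = 0)"
  proof -
    fix u v assume u: "u \<in> FS" and v: "v \<in> FS" and e: "P u u = P u v"
    have nn: "\<And>n. 0 \<le> tm u v n - tm u u n" unfolding tm_def
      using p_self_le FS_app[OF u aX] FS_app[OF v aX] th0 by (simp add: mult_left_mono)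
    have s: "summable (\<lambda>n. tm u v n - tm u u n)" using summable_diff tm_summable u v by blast
    have "(\<Sum>n. tm u v n - tm u u n) = 0" using P_diff[OF u v u u] e by simp
    then show "\<forall>n. tm u v n - tm u u n = 0" using suminf_eq_zero_iff[OF s nn] by blast
  qed
  have z1: "\<forall>n. tm f g n - tm f f n = 0" using zero[OF f g] e by blast
  have z2: "\<forall>n. tm g f n - tm g g n = 0" using zero[OF g f] e P_sym[OF f g] by simp
  show "f = g"
  proof (rule eq_on_basis[OF f g])
    fix n
    have y: "f (a (Suc n)) \<in> Y" "g (a (Suc n)) \<in> Y" using FS_app f g aX by auto
    have pos: "\<theta> ^ Suc n > 0" using th0 by simp
    have 1: "pY (f (a (Suc n))) (g (a (Suc n))) = pY (f (a (Suc n))) (f (a (Suc n)))"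
      using z1[rule_format, of n] pos th0 unfolding tm_def by simp
    have 2: "pY (g (a (Suc n))) (f (a (Suc n))) = pY (g (a (Suc n))) (g (a (Suc n)))"
      using z2[rule_format, of n] pos th0 unfolding tm_def by simp
    show "f (a (Suc n)) = g (a (Suc n))"
      using p_sep[OF y] 1 2 p_sym[OF y] by simp
  qed
next
  fix f g h assume f: "f \<in> FS" and g: "g \<in> FS" and h: "h \<in> FS"
  have le: "\<And>n. tm f g n \<le> tm f h n + tm h g n - tm h h n" unfolding tm_def
    using p_tri[OF FS_app[OF f aX] FS_app[OF g aX] FS_app[OF h aX]] th0
    by (simp add: mult_left_mono flip: distrib_left right_diff_distrib)
  have "P f h + P h g - P h h = (\<Sum>n. tm f h n + tm h g n - tm h h n)"
    unfolding P_eq using suminf_add[OF tm_summable[OF f h] tm_summable[OF h g]]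
      suminf_diff[OF summable_add[OF tm_summable[OF f h] tm_summable[OF h g]] tm_summable[OF h h]]
    by simp
  moreover have "P f g \<le> (\<Sum>n. tm f h n + tm h g n - tm h h n)"
    unfolding P_eq
    by (rule suminf_le[OF le tm_summable[OF f g]])
      (intro summable_diff summable_add tm_summable f g h)
  ultimately show "P f g \<le> P f h + P h g - P h h" by simp
qed

end



context setting2
begin

lemma P_anti:
  assumes f: "f \<in> FS" and g: "g \<in> FS" and k: "k \<in> FS" and fg: "FL f g"
  shows "P g k \<le> P f k"
  unfolding P_eq
proof (rule suminf_le[OF _ tm_summable[OF g k] tm_summable[OF f k]])
  fix n
  have "pY (g (a (Suc n))) (k (a (Suc n))) \<le> pY (f (a (Suc n))) (k (a (Suc n)))"
    using anti[OF FS_app[OF f aX] FS_app[OF g aX] FS_app[OF k aX]] fg aX unfolding fun_le_def by blast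
  then show "tm g k n \<le> tm f k n" unfolding tm_def using th0 by (simp add: mult_left_mono)
qed

lemma P_above:
  assumes f: "f \<in> FS" and s: "s \<in> FS" and sf: "FL s f"
  shows "P f s = P s s"
proof -
  have "\<And>n. tm f s n = tm s s n"
  proof -
    fix n
    have "pY (s (a (Suc n))) (f (a (Suc n))) = pY (s (a (Suc n))) (s (a (Suc n)))"
      using le_p[OF FS_app[OF s aX] FS_app[OF f aX]] sf aX unfolding fun_le_def by blast
    then show "tm f s n = tm s s n" unfolding tm_def using p_sym[OF FS_app[OF s aX] FS_app[OF f aX]] by simp
  qed
  then have "tm f s = tm s s" by (rule ext)
  then show ?thesis unfolding P_eq by simp
qed

lemma term_le_diff:
  assumes h: "h \<in> FS" and s: "s \<in> FS"
  shows "\<theta> ^ Suc m * (pY (h (a (Suc m))) (s (a (Suc m))) - pY (s (a (Suc m))) (s (a (Suc m))))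
     \<le> P h s - P s s"
proof -
  have nn: "\<And>n. 0 \<le> tm h s n - tm s s n" unfolding tm_def
    using p_self_le[OF FS_app[OF s aX] FS_app[OF h aX]] p_sym[OF FS_app[OF s aX] FS_app[OF h aX]] th0
    by (simp add: mult_left_mono)
  have sm: "summable (\<lambda>n. tm h s n - tm s s n)" using summable_diff tm_summable h s by blast
  have "sum (\<lambda>n. tm h s n - tm s s n) {m} \<le> (\<Sum>n. tm h s n - tm s s n)"
    by (rule sum_le_suminf[OF sm]) (use nn in auto)
  then show ?thesis using P_diff[OF h s s s] unfolding tm_def by (simp add: right_diff_distrib)
qed

lemma scott_sub_pm:
  assumes U: "U \<in> scott_open_sets FS FL"
  shows "U \<in> pm_open_sets FS P"
proof -
  have UF: "U \<subseteq> FS" and upper: "\<And>x y. x \<in> U \<Longrightarrow> y \<in> FS \<Longrightarrow> FL x y \<Longrightarrow> y \<in> U"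
    and wbU: "\<And>x. x \<in> U \<Longrightarrow> \<exists>y\<in>U. way_below FS FL y x"
    using U unfolding scott_open_sets_def by auto
  have key: "\<exists>k e. k \<in> FS \<and> 0 < e \<and> f \<in> pm_ball FS P k e \<and> pm_ball FS P k e \<subseteq> U" if fU: "f \<in> U" for f
  proof -
    have fF: "f \<in> FS" using fU UF by blast
    obtain g where g: "g \<in> U" "way_below FS FL g f" using wbU[OF fU] by blast
    obtain s where s: "s \<in> step ` {F. adm f F}" "FL g s"
      using g(2) fam_dir[OF fF] fam_lub[OF fF] po_refl[OF poFS fF] unfolding way_below_def by blast
    obtain F where F: "adm f F" "s = step F" using s by blast
    have sF: "s \<in> FS" using step_FS[OF fF F(1)] F by simp
    have sU: "s \<in> U" using upper[OF g(1) sF s(2)] .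
    have Q: "\<forall>p\<in>F. \<exists>e>0. \<forall>h\<in>FS. P h s < P s s + e \<longrightarrow> leY (snd p) (h (fst p))"
    proof
      fix p assume pF: "p \<in> F"
      obtain c b where cb: "p = (c, b)" by fastforce
      have A: "c \<in> X" "compact_elem X leX c" "b \<in> Y" "compact_elem Y leY b" "leY b (f c)"
        using admD[OF F(1) pF[unfolded cb]] by auto
      obtain m where m: "c = a (Suc m)" using compact_idx[OF A(1,2)] by blast
      let ?V = "{y\<in>Y. leY b y}"
      have V: "?V \<in> scott_open_sets Y leY" using upset_open[OF poY A(3,4)] .
      have "leY b (s c)" using step_ge[OF fF F(1) A(1) pF[unfolded cb] po_refl[OF poX A(1)]] F(2) by simp
      then have scV: "s c \<in> ?V" using FS_app[OF sF A(1)] by simp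
      obtain \<eta> where eta: "\<eta> > 0" "pm_ball Y pY (s c) \<eta> \<subseteq> ?V" using open_ball_inside[OF V scV] by blast
      have "\<forall>h\<in>FS. P h s < P s s + \<theta> ^ Suc m * \<eta> \<longrightarrow> leY b (h c)"
      proof (intro ballI impI)
        fix h assume h: "h \<in> FS" and hb: "P h s < P s s + \<theta> ^ Suc m * \<eta>"
        have "\<theta> ^ Suc m * (pY (h c) (s c) - pY (s c) (s c)) < \<theta> ^ Suc m * \<eta>"
          using term_le_diff[OF h sF, of m] hb m by simp
        then have "pY (h c) (s c) - pY (s c) (s c) < \<eta>"
          using th0 by (simp add: mult_less_cancel_left_pos)
        then have "h c \<in> pm_ball Y pY (s c) \<eta>" using FS_app[OF h A(1)] by (simp add: pm_ball_def)
        then show "leY b (h c)" using eta by blast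
      qed
      moreover have "\<theta> ^ Suc m * \<eta> > 0" using th0 eta by simp
      ultimately show "\<exists>e>0. \<forall>h\<in>FS. P h s < P s s + e \<longrightarrow> leY (snd p) (h (fst p))"
        using cb by auto
    qed
    have fin: "finite F" using F(1) unfolding adm_def by simp
    have mono: "\<And>p e e'. (\<forall>h\<in>FS. P h s < P s s + e \<longrightarrow> leY (snd p) (h (fst p))) \<Longrightarrow> 0 < e' \<Longrightarrow> e' \<le> e
        \<Longrightarrow> (\<forall>h\<in>FS. P h s < P s s + e' \<longrightarrow> leY (snd p) (h (fst p)))"
    proof (intro ballI impI)
      fix p e e' h assume 1: "\<forall>h\<in>FS. P h s < P s s + e \<longrightarrow> leY (snd p) (h (fst p))" "e' \<le> e" "h \<in> FS"
        "P h s < P s s + e'"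
      then show "leY (snd p) (h (fst p))" by force
    qed
    have "\<exists>e>0. \<forall>p\<in>F. \<forall>h\<in>FS. P h s < P s s + e \<longrightarrow> leY (snd p) (h (fst p))"
      using finite_min_pos[of F "\<lambda>p e. \<forall>h\<in>FS. P h s < P s s + e \<longrightarrow> leY (snd p) (h (fst p))", OF fin Q]
        mono by blast
    then obtain e where e: "e > 0" "\<forall>p\<in>F. \<forall>h\<in>FS. P h s < P s s + e \<longrightarrow> leY (snd p) (h (fst p))"
      by blast
    have "f \<in> pm_ball FS P s e"
      using fF P_above[OF fF sF] step_FL_f[OF fF F(1)] F(2) e(1) by (simp add: pm_ball_def)
    moreover have "pm_ball FS P s e \<subseteq> U"
    proof
      fix h assume "h \<in> pm_ball FS P s e"
      then have h: "h \<in> FS" "P h s < P s s + e" by (auto simp: pm_ball_def)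
      have "FL (step F) h"
      proof (rule step_FL[OF fF F(1) h(1)])
        fix c b assume "(c, b) \<in> F"
        then show "leY b (h c)" using e(2) h by force
      qed
      then show "h \<in> U" using upper[OF sU h(1)] F(2) by simp
    qed
    ultimately show ?thesis using sF e(1) by blast
  qed
  let ?B = "{pm_ball FS P k e | k e. k \<in> FS \<and> 0 < e \<and> pm_ball FS P k e \<subseteq> U}"
  have "U = \<Union>?B"
  proof
    show "U \<subseteq> \<Union>?B"
    proof
      fix f assume "f \<in> U"
      then obtain k e where "k \<in> FS" "0 < e" "f \<in> pm_ball FS P k e" "pm_ball FS P k e \<subseteq> U"
        using key by blast
      then show "f \<in> \<Union>?B" by blast
    qed
    show "\<Union>?B \<subseteq> U" by blast
  qed
  moreover have "?B \<subseteq> {pm_ball FS P x e | x e. x \<in> FS \<and> e > 0}" by blast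
  ultimately show ?thesis unfolding pm_open_sets_def by blast
qed

lemma approx_point:
  assumes f: "f \<in> FS" and x: "x \<in> X" and z: "z \<in> Y" and d: "\<delta> > 0"
  shows "\<exists>c b. c \<in> X \<and> compact_elem X leX c \<and> b \<in> Y \<and> compact_elem Y leY b \<and> leY b (f c) \<and>
     leX c x \<and> pY b z < pY (f x) z + \<delta>"
proof -
  have fx: "f x \<in> Y" using FS_app[OF f x] .
  obtain b where b: "b \<in> {b\<in>BY. way_below Y leY b (f x)}" "pY b z < pY (f x) z + \<delta>"
    using lower_cont[OF conjunct1[OF basisY_at[OF fx]] conjunct2[OF basisY_at[OF fx]] z, of "pY (f x) z + \<delta>"] d
    by auto
  have bY: "b \<in> Y" "compact_elem Y leY b" using b(1) BY_sub compY by auto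
  have bfx: "leY b (f x)" using wb_le[OF poY fx] b(1) by blast
  obtain t where t: "t \<in> f ` {c\<in>BX. way_below X leX c x}" "leY b t"
    using compact_lub[OF bY(2) conjunct1[OF f_basis[OF f x]] conjunct2[OF f_basis[OF f x]] bfx] by blast
  then obtain c where c: "c \<in> BX" "way_below X leX c x" "t = f c" by blast
  have "c \<in> X" "compact_elem X leX c" using c BX_sub compX by auto
  moreover have "leX c x" using wb_le[OF poX x c(2)] .
  moreover have "leY b (f c)" using t c(3) by simp
  ultimately show ?thesis using bY b(2) by blast
qed

lemma approx_ball:
  assumes k: "k \<in> FS" and f: "f \<in> FS" and fk: "P f k < P k k + e"
  shows "\<exists>F. adm f F \<and> P (step F) k < P k k + e"
proof -
  define \<gamma> where "\<gamma> = P k k + e - P f k"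
  have g0: "\<gamma> > 0" using fk \<gamma>_def by simp
  have h2: "\<gamma> / 2 > 0" using g0 by simp
  obtain N where N: "\<theta> ^ N < \<gamma> / 2" using real_arch_pow_inv[of "\<gamma>/2" \<theta>] g0 th1 by auto
  let ?R = "\<lambda>n cb. fst cb \<in> X \<and> compact_elem X leX (fst cb) \<and> snd cb \<in> Y \<and> compact_elem Y leY (snd cb)
     \<and> leY (snd cb) (f (fst cb)) \<and> leX (fst cb) (a (Suc n))
     \<and> pY (snd cb) (k (a (Suc n))) < pY (f (a (Suc n))) (k (a (Suc n))) + \<gamma> / 2"
  have "\<forall>n. \<exists>cb. ?R n cb"
  proof
    fix n
    obtain c b where "c \<in> X \<and> compact_elem X leX c \<and> b \<in> Y \<and> compact_elem Y leY b \<and> leY b (f c) \<and>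
     leX c (a (Suc n)) \<and> pY b (k (a (Suc n))) < pY (f (a (Suc n))) (k (a (Suc n))) + \<gamma> / 2"
      using approx_point[OF f aX[of n] FS_app[OF k aX[of n]], of "\<gamma>/2"] h2 by blast
    then show "\<exists>cb. ?R n cb" by (intro exI[of _ "(c, b)"]) simp
  qed
  then obtain G where G: "\<And>n. ?R n (G n)" by metis
  define F where "F = G ` {..<N}"
  have A: "adm f F" unfolding adm_def F_def using G by auto
  define s where "s = step F"
  have sF: "s \<in> FS" using step_FS[OF f A] s_def by simp
  have sf: "FL s f" using step_FL_f[OF f A] s_def by simp
  define d where "d n = tm s k n - tm f k n" for n
  define E where "E n = (if n < N then \<theta> ^ Suc n * (\<gamma> / 2) else \<theta> ^ Suc n)" for n
  have dE: "d n \<le> E n" for n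
  proof (cases "n < N")
    case True
    let ?x = "a (Suc n)" and ?z = "k (a (Suc n))"
    have GF: "(fst (G n), snd (G n)) \<in> F" using True F_def by simp
    have "leY (snd (G n)) (s ?x)" using step_ge[OF f A aX GF] G[of n] s_def by simp
    then have "pY (s ?x) ?z \<le> pY (snd (G n)) ?z"
      using anti[OF _ FS_app[OF sF aX] FS_app[OF k aX]] G[of n] by blast
    then have "pY (s ?x) ?z - pY (f ?x) ?z \<le> \<gamma> / 2" using G[of n] by linarith
    then have "\<theta> ^ Suc n * (pY (s ?x) ?z - pY (f ?x) ?z) \<le> \<theta> ^ Suc n * (\<gamma> / 2)"
      using th0 by (simp add: mult_left_mono)
    then show ?thesis unfolding d_def E_def tm_def using True by (simp add: right_diff_distrib)
  next
    case False
    have "d n \<le> \<theta> ^ Suc n" unfolding d_def using tm_bounds[OF sF k, of n] tm_bounds[OF f k, of n] by simp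
    then show ?thesis unfolding E_def using False by simp
  qed
  have sd: "summable d" unfolding d_def using summable_diff tm_summable sF f k by blast
  have E_le: "E n \<le> \<theta> ^ Suc n * (\<gamma> / 2 + 1)" for n
    unfolding E_def using th0 g0 by (auto simp: distrib_left)
  have E_nn: "0 \<le> E n" for n unfolding E_def using th0 g0 by simp
  have sE: "summable E"
    by (rule summable_comparison_test[OF _ summable_mult2[OF geo(1)]]) (use E_le E_nn in auto)
  have split: "suminf E = (\<Sum>n. E (n + N)) + (\<Sum>i<N. E i)"
    using suminf_split_initial_segment[OF sE] .
  have tail: "(\<Sum>n. E (n + N)) = \<theta> ^ N * (\<Sum>n. \<theta> ^ Suc n)"
  proof -
    have "(\<lambda>n. E (n + N)) = (\<lambda>n. \<theta> ^ N * \<theta> ^ Suc n)" unfolding E_def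
      by (auto simp: power_add mult_ac)
    then show ?thesis using suminf_mult[OF geo(1)] by simp
  qed
  have "\<theta> ^ N * (\<Sum>n. \<theta> ^ Suc n) \<le> \<theta> ^ N"
    using geo(2) th0 mult_left_mono[of _ 1 "\<theta> ^ N"] by simp
  then have t2: "(\<Sum>n. E (n + N)) < \<gamma> / 2" using tail N by simp
  have "(\<Sum>i<N. E i) = (\<Sum>i<N. \<theta> ^ Suc i) * (\<gamma> / 2)"
    unfolding E_def by (simp add: sum_distrib_right)
  also have "\<dots> \<le> 1 * (\<gamma> / 2)"
  proof (rule mult_right_mono)
    have "(\<Sum>i<N. \<theta> ^ Suc i) \<le> (\<Sum>n. \<theta> ^ Suc n)"
      by (rule sum_le_suminf[OF geo(1)]) (use th0 in auto)
    then show "(\<Sum>i<N. \<theta> ^ Suc i) \<le> 1" using geo(2) by simp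
  qed (use g0 in simp)
  finally have t1: "(\<Sum>i<N. E i) \<le> \<gamma> / 2" by simp
  have "suminf d \<le> suminf E" by (rule suminf_le[OF dE sd sE])
  then have "suminf d < \<gamma>" using split t1 t2 by simp
  moreover have "P s k - P f k = suminf d" unfolding d_def using P_diff[OF sF k f k] by simp
  ultimately have "P s k < P k k + e" using \<gamma>_def by simp
  then show ?thesis using A s_def by blast
qed

lemma pm_sub_scott:
  assumes U: "U \<in> pm_open_sets FS P"
  shows "U \<in> scott_open_sets FS FL"
proof -
  obtain B where B: "U = \<Union>B" "B \<subseteq> {pm_ball FS P x e | x e. x \<in> FS \<and> e > 0}"
    using U unfolding pm_open_sets_def by blast
  have UF: "U \<subseteq> FS" using B by (auto simp: pm_ball_def)
  have up: "\<forall>x\<in>U. \<forall>y\<in>FS. FL x y \<longrightarrow> y \<in> U"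
  proof (intro ballI impI)
    fix f g assume f: "f \<in> U" and g: "g \<in> FS" and fg: "FL f g"
    obtain k e where ke: "k \<in> FS" "pm_ball FS P k e \<in> B" "f \<in> pm_ball FS P k e" using f B by blast
    have "P g k \<le> P f k" using P_anti[OF _ g ke(1) fg] ke(3) by (auto simp: pm_ball_def)
    then have "g \<in> pm_ball FS P k e" using ke(3) g by (auto simp: pm_ball_def)
    then show "g \<in> U" using ke(2) B(1) by blast
  qed
  have wb: "\<forall>x\<in>U. \<exists>y\<in>U. way_below FS FL y x"
  proof
    fix f assume f: "f \<in> U"
    obtain k e where ke: "k \<in> FS" "pm_ball FS P k e \<in> B" "f \<in> pm_ball FS P k e" using f B by blast
    have fF: "f \<in> FS" and fk: "P f k < P k k + e" using ke(3) by (auto simp: pm_ball_def)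
    obtain F where F: "adm f F" "P (step F) k < P k k + e" using approx_ball[OF ke(1) fF fk] by blast
    have "step F \<in> pm_ball FS P k e" using step_FS[OF fF F(1)] F(2) by (simp add: pm_ball_def)
    then have "step F \<in> U" using ke(2) B(1) by blast
    then show "\<exists>y\<in>U. way_below FS FL y f" using step_wb[OF fF F(1)] by blast
  qed
  show ?thesis unfolding scott_open_sets_def using UF up wb by blast
qed

theorem main: "quantified_by FS FL P"
  unfolding quantified_by_def
  using dcpoFS pm_FS scott_sub_pm pm_sub_scott by blast

end


theorem mainTheorem7:
  fixes X :: "'a set" and leX :: "'a \<Rightarrow> 'a \<Rightarrow> bool" and pX :: "'a \<Rightarrow> 'a \<Rightarrow> real"
    and Y :: "'b set" and leY :: "'b \<Rightarrow> 'b \<Rightarrow> bool" and pY :: "'b \<Rightarrow> 'b \<Rightarrow> real"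
    and a :: "nat \<Rightarrow> 'a" and \<theta> :: real
  assumes "scott_domain X leX" and "scott_domain Y leY"
    and "quantified_by X leX pX" and "quantified_by Y leY pY"
    and "\<forall>x\<in>X. \<forall>y\<in>X. 0 \<le> pX x y \<and> pX x y \<le> 1"
    and "\<forall>x\<in>Y. \<forall>y\<in>Y. 0 \<le> pY x y \<and> pY x y \<le> 1"
    and "countable (a ` {1..})" and "is_basis X leX (a ` {1..})"
    and "0 < \<theta>" and "\<theta> \<le> 1/2"
  shows "quantified_by (fun_space X leX Y leY) (fun_le X leY) (fun_pm \<theta> a pY)"
proof -
  obtain BX where BX: "is_basis X leX BX" "\<forall>b\<in>BX. compact_elem X leX b"
    using assms(1) unfolding scott_domain_def by blast
  obtain BY where BY: "is_basis Y leY BY" "\<forall>b\<in>BY. compact_elem Y leY b"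
    using assms(2) unfolding scott_domain_def by blast
  have poX: "partial_order_on X leX" using assms(1) unfolding scott_domain_def dcpo_def by blast
  have dY: "dcpo Y leY" "bounded_complete Y leY" using assms(2) unfolding scott_domain_def by blast+
  have pb: "\<forall>x\<in>Y. \<forall>y\<in>Y. pY x y \<le> 1" using assms(6) by blast
  have "setting2 Y leY pY X leX BX BY \<theta> a"
    unfolding setting2_def setting2_axioms_def setting_def setting_axioms_def qpm_def
    using assms(4,8,9,10) BX BY poX dY pb by blast
  then show ?thesis using setting2.main by blast
qed

end
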